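(* Let $p$ be an odd prime and $\chi$ a primitive Dirichlet character with odd conductor $f$. For every integer $n\ge0$, in $\mathbb Q_p(\chi)$, $$(1-\chi(p)p^n)E_{n,\chi}=\lim_{N\to\infty}\sum_{\substack{a=1\\ p\nmid a}}^{fp^N}(-1)^a\chi(a)a^n .$$
   Context: We set $\chi(a)=0$ if $a$ is not prime to $f$. The generalized Euler numbers are defined by $2\sum_{a=1}^{f}\frac{(-1)^a\chi(a)e^{at}}{e^{ft}+1}=\sum_{n\ge0}E_{n,\chi}\frac{t^n}{n!}$, viewed in $\mathbb Q_p(\chi)$, the field generated over $\mathbb Q_p$ by the values of $\chi$. *)

theory Defs
  imports Complex_Main "HOL-Computational_Algebra.Computational_Algebra"
    "HOL-Number_Theory.Number_Theory"
begin

definition dirichlet_char :: "nat \<Rightarrow> (nat \<Rightarrow> complex) \<Rightarrow> bool" where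
  "dirichlet_char f chi \<longleftrightarrow> f > 0 \<and>
     (\<forall>a b. chi (a * b) = chi a * chi b) \<and>
     (\<forall>a. chi (a + f) = chi a) \<and>
     (\<forall>a. chi a = 0 \<longleftrightarrow> \<not> coprime a f)"

text \<open>Primitive with conductor f: f is the least modulus of the character, i.e. no proper
  divisor d of f is such that chi is 1 on all units mod f congruent to 1 mod d.\<close>
definition primitive_char :: "nat \<Rightarrow> (nat \<Rightarrow> complex) \<Rightarrow> bool" where
  "primitive_char f chi \<longleftrightarrow> dirichlet_char f chi \<and>
     (\<forall>d. d dvd f \<and> d < f \<longrightarrow>
        \<not> (\<forall>a. coprime a f \<and> [a = 1] (mod d) \<longrightarrow> chi a = 1))"

definition euler_chi :: "(nat \<Rightarrow> complex) \<Rightarrow> nat \<Rightarrow> nat \<Rightarrow> complex" where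
  "euler_chi chi f n = fact n *
     fps_nth (2 * (\<Sum>a=1..f. fps_const ((-1) ^ a * chi a) * fps_exp (of_nat a))
              * inverse (fps_exp (of_nat f) + 1)) n"

definition alg_int :: "complex \<Rightarrow> bool" where
  "alg_int x \<longleftrightarrow> (\<exists>q :: int poly. lead_coeff q = 1 \<and> poly (map_poly of_int q) x = 0)"

text \<open>x is integral at every prime above p (in any number field containing x).\<close>
definition p_integral :: "nat \<Rightarrow> complex \<Rightarrow> bool" where
  "p_integral p x \<longleftrightarrow> (\<exists>\<alpha> (m::int). alg_int \<alpha> \<and> m \<noteq> 0 \<and> \<not> int p dvd m \<and> x = \<alpha> / of_int m)"

text \<open>p-adic convergence (simultaneously at all primes above p) of algebraic numbers.\<close>
definition padic_tendsto :: "nat \<Rightarrow> (nat \<Rightarrow> complex) \<Rightarrow> complex \<Rightarrow> bool" where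
  "padic_tendsto p S L \<longleftrightarrow>
     (\<forall>k::nat. \<exists>N0. \<forall>N\<ge>N0. p_integral p ((S N - L) / of_nat p ^ k))"

end

theory Submission
  imports Defs "Jordan_Normal_Form.Char_Poly"
begin


lemma alg_int_eig:
  fixes A :: "int mat" and v :: "complex vec"
  assumes A: "A \<in> carrier_mat M M" and v: "v \<in> carrier_vec M" "v \<noteq> 0\<^sub>v M"
   and e: "map_mat of_int A *\<^sub>v v = \<alpha> \<cdot>\<^sub>v v"
  shows "alg_int \<alpha>"
proof -
  let ?B = "map_mat (of_int :: int \<Rightarrow> complex) A"
  have B: "?B \<in> carrier_mat M M" using A by simp
  have "eigenvalue ?B \<alpha>" unfolding eigenvalue_def eigenvector_def using v e B by auto
  hence "poly (char_poly ?B) \<alpha> = 0" using eigenvalue_root_char_poly[OF B] by simp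
  moreover have "char_poly ?B = map_poly of_int (char_poly A)"
    using of_int_hom.char_poly_hom[OF A] by simp
  moreover have "lead_coeff (char_poly A) = 1" using degree_monic_char_poly[OF A] by simp
  ultimately show ?thesis unfolding alg_int_def by auto
qed

definition zz :: "nat \<Rightarrow> complex" where "zz M = cis (2*pi/real M)"
definition vv :: "nat \<Rightarrow> complex vec" where "vv M = vec M (\<lambda>i. zz M ^ i)"
definition RR :: "nat \<Rightarrow> complex set" where
  "RR M = {\<alpha>. \<exists>A::int mat. A \<in> carrier_mat M M \<and> map_mat of_int A *\<^sub>v vv M = \<alpha> \<cdot>\<^sub>v vv M}"

lemma zz_pow: "M > 0 \<Longrightarrow> zz M ^ M = 1"
  unfolding zz_def by (simp add: DeMoivre)

lemma RR_add: assumes "a \<in> RR M" "b \<in> RR M" shows "a + b \<in> RR M"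
proof -
  from assms obtain A B where A: "A \<in> carrier_mat M M" "map_mat of_int A *\<^sub>v vv M = a \<cdot>\<^sub>v vv M"
    and B: "B \<in> carrier_mat M M" "map_mat of_int B *\<^sub>v vv M = b \<cdot>\<^sub>v vv M" unfolding RR_def by auto
  have v: "vv M \<in> carrier_vec M" unfolding vv_def by simp
  have "map_mat of_int (A + B) = map_mat (of_int::int\<Rightarrow>complex) A + map_mat of_int B"
    using A B by (intro eq_matI) auto
  hence "map_mat of_int (A + B) *\<^sub>v vv M = (a + b) \<cdot>\<^sub>v vv M"
    using A B v by (simp add: add_mult_distrib_mat_vec[of _ M M _ _ ] add_smult_distrib_vec)
  thus ?thesis using A B unfolding RR_def by (intro CollectI exI[of _ "A+B"]) auto
qed

lemma RR_mult: assumes "a \<in> RR M" "b \<in> RR M" shows "a * b \<in> RR M"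
proof -
  from assms obtain A B where A: "A \<in> carrier_mat M M" "map_mat of_int A *\<^sub>v vv M = a \<cdot>\<^sub>v vv M"
    and B: "B \<in> carrier_mat M M" "map_mat of_int B *\<^sub>v vv M = b \<cdot>\<^sub>v vv M" unfolding RR_def by auto
  have v: "vv M \<in> carrier_vec M" unfolding vv_def by simp
  have "map_mat of_int (A * B) = map_mat (of_int::int\<Rightarrow>complex) A * map_mat of_int B"
    using A B by (simp add: of_int_hom.mat_hom_mult)
  hence "map_mat of_int (A * B) *\<^sub>v vv M = (map_mat of_int A) *\<^sub>v (map_mat of_int B *\<^sub>v vv M)"
    using A B v by (simp add: assoc_mult_mat_vec[of _ M M _ M])
  also have "\<dots> = b \<cdot>\<^sub>v (a \<cdot>\<^sub>v vv M)" using A B v by (simp add: mult_mat_vec[of _ M M])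
  also have "\<dots> = (a*b) \<cdot>\<^sub>v vv M" by (simp add: smult_smult_assoc mult.commute)
  finally show ?thesis using A B unfolding RR_def by (intro CollectI exI[of _ "A*B"]) auto
qed

lemma sum_single: "(k::nat) < M \<Longrightarrow> (\<And>j. j \<noteq> k \<Longrightarrow> h j = 0) \<Longrightarrow> (\<Sum>j = 0..<M. h j * g j) = h k * (g k::complex)"
  by (subst sum.remove[of _ k]) (auto intro!: sum.neutral)

lemma RR_int: "of_int c \<in> RR M"
proof -
  let ?A = "mat M M (\<lambda>(i,j). if i = j then c else 0)"
  have "map_mat of_int ?A *\<^sub>v vv M = of_int c \<cdot>\<^sub>v vv M"
    unfolding vv_def proof (intro eq_vecI)
    fix i assume "i < dim_vec (of_int c \<cdot>\<^sub>v vec M (\<lambda>i. zz M ^ i))"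
    hence i: "i < M" by simp
    have "(\<Sum>j = 0..<M. of_int (if i = j then c else 0) * zz M ^ j) = of_int c * zz M ^ i"
      using sum_single[OF i, of "\<lambda>j. of_int (if i = j then c else 0)"] by simp
    thus "(map_mat of_int ?A *\<^sub>v vec M (\<lambda>i. zz M ^ i)) $ i = (of_int c \<cdot>\<^sub>v vec M (\<lambda>i. zz M ^ i)) $ i"
      using i by (simp add: scalar_prod_def)
  qed simp
  thus ?thesis unfolding RR_def by (intro CollectI exI[of _ ?A]) auto
qed

lemma RR_zz: assumes "M > 0" shows "zz M \<in> RR M"
proof -
  let ?A = "mat M M (\<lambda>(i,j). if j = Suc i mod M then 1 else 0 :: int)"
  have "map_mat of_int ?A *\<^sub>v vv M = zz M \<cdot>\<^sub>v vv M"
  proof (intro eq_vecI)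
    fix i assume "i < dim_vec (zz M \<cdot>\<^sub>v vv M)"
    hence i: "i < M" by (simp add: vv_def)
    have "(map_mat of_int ?A *\<^sub>v vv M) $ i = (\<Sum>j=0..<M. of_int (if j = Suc i mod M then 1 else 0::int) * zz M ^ j)"
      using i by (simp add: vv_def scalar_prod_def)
    also have "\<dots> = zz M ^ (Suc i mod M)" using assms
      using sum_single[of "Suc i mod M" M "\<lambda>j. of_int (if j = Suc i mod M then 1 else 0::int)"] by simp
    also have "\<dots> = zz M ^ Suc i"
    proof -
      have "zz M ^ Suc i = zz M ^ (Suc i mod M) * (zz M ^ M) ^ (Suc i div M)"
        by (simp only: power_add[symmetric] power_mult[symmetric] mod_mult_div_eq)
      thus ?thesis using zz_pow[OF assms] by simp
    qed
    finally show "(map_mat of_int ?A *\<^sub>v vv M) $ i = (zz M \<cdot>\<^sub>v vv M) $ i" using i by (simp add: vv_def)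
  qed (simp add: vv_def)
  thus ?thesis unfolding RR_def by (intro CollectI exI[of _ ?A]) auto
qed



lemma euler_rec:
  fixes F n :: nat and chi :: "nat \<Rightarrow> complex"
  shows "euler_chi chi F n + (\<Sum>i=0..n. of_nat (n choose i) * of_nat F ^ i * euler_chi chi F (n - i))
         = 2 * (\<Sum>a=1..F. (-1) ^ a * chi a * of_nat a ^ n)"
proof -
  define T where "T = (\<Sum>a=1..F. fps_const ((-1) ^ a * chi a) * fps_exp (of_nat a :: complex))"
  define D where "D = fps_exp (of_nat F :: complex) + 1"
  define G where "G = 2 * T * inverse D"
  have E: "euler_chi chi F k = fact k * G $ k" for k unfolding euler_chi_def G_def T_def D_def by simp
  have D0: "D $ 0 = 2" unfolding D_def by simp
  have DG: "D * G = 2 * T" unfolding G_def using inverse_mult_eq_1'[of D] D0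
    by (simp add: mult.commute mult.left_commute)
  have Dn: "D $ i = of_nat F ^ i / fact i + (if i = 0 then 1 else 0)" for i
    unfolding D_def by simp
  have "(D * G) $ n = (\<Sum>i=0..n. (of_nat F ^ i / fact i) * G $ (n - i)) + G $ n"
  proof -
    have "(\<Sum>i=0..n. (if i = 0 then 1 else 0) * G $ (n - i)) = (\<Sum>i=0..n. if i = 0 then G $ n else 0)"
      by (intro sum.cong) auto
    also have "\<dots> = G $ n" by (simp add: sum.delta)
    finally show ?thesis unfolding fps_mult_nth Dn by (simp add: distrib_right sum.distrib)
  qed
  also have "(\<Sum>i=0..n. (of_nat F ^ i / fact i) * G $ (n - i)) =
     (\<Sum>i=0..n. of_nat (n choose i) * of_nat F ^ i * euler_chi chi F (n - i)) / fact n"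
    unfolding sum_divide_distrib E
  proof (intro sum.cong refl)
    fix i assume "i \<in> {0..n}" hence i: "i \<le> n" by simp
    show "of_nat F ^ i / fact i * G $ (n - i) =
          of_nat (n choose i) * of_nat F ^ i * (fact (n - i) * G $ (n - i)) / fact n"
      using i by (simp add: binomial_fact field_simps)
  qed
  finally have L: "(D * G) $ n = ((\<Sum>i=0..n. of_nat (n choose i) * of_nat F ^ i * euler_chi chi F (n - i)) + euler_chi chi F n) / fact n"
    unfolding E by (simp add: field_simps)
  have "(2 * T) $ n = 2 * (\<Sum>a=1..F. (-1) ^ a * chi a * of_nat a ^ n) / fact n"
  proof -
    have "(2 * T) $ n = 2 * T $ n" by (simp add: numeral_fps_const)
    also have "T $ n = (\<Sum>a=1..F. (-1) ^ a * chi a * of_nat a ^ n / fact n)"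
      unfolding T_def fps_sum_nth by simp
    finally show ?thesis by (simp only: sum_divide_distrib[symmetric]) simp
  qed
  with L DG show ?thesis by (simp add: field_simps)
qed

lemma char_period:
  assumes "dirichlet_char f chi" shows "chi (b + f * i) = chi b"
proof (induction i)
  case (Suc i)
  have "chi (b + f * Suc i) = chi ((b + f * i) + f)" by (simp add: algebra_simps)
  also have "\<dots> = chi (b + f * i)" using assms unfolding dirichlet_char_def by blast
  finally show ?case using Suc by simp
qed simp

lemma geom_fps: "((X::'a::comm_ring_1) + 1) * (\<Sum>i<m. (-X)^i) = 1 - (-X)^m"
  by (induction m) (auto simp: algebra_simps)

definition TT :: "(nat \<Rightarrow> complex) \<Rightarrow> nat \<Rightarrow> complex fps" where
  "TT chi F = (\<Sum>a=1..F. fps_const ((-1) ^ a * chi a) * fps_exp (of_nat a))"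

lemma TT_mult:
  assumes "dirichlet_char f chi" "odd f"
  shows "TT chi (f * m) = TT chi f * (\<Sum>i<m. (- fps_exp (of_nat f))^i)"
proof (induction m)
  case 0 thus ?case by (simp add: TT_def)
next
  case (Suc m)
  let ?g = "\<lambda>a. fps_const ((-1) ^ a * chi a) * fps_exp (of_nat a :: complex)"
  have "TT chi (f * Suc m) = (\<Sum>a=1..f*m + f. ?g a)" by (simp only: TT_def mult_Suc_right add.commute)
  also have "\<dots> = TT chi (f*m) + (\<Sum>a=f*m+1..f*m + f. ?g a)"
    unfolding TT_def by (rule sum.ub_add_nat) simp
  also have "(\<Sum>a=f*m+1..f*m + f. ?g a) = (\<Sum>b=1..f. ?g (b + f*m))"
    using sum.shift_bounds_cl_nat_ivl[of ?g 1 "f*m" f] by (simp add: add.commute)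
  also have "\<dots> = (\<Sum>b=1..f. ?g b * (- fps_exp (of_nat f))^m)"
  proof (intro sum.cong refl)
    fix b
    have c: "chi (b + f*m) = chi b" using char_period[OF assms(1)] .
    have f1: "(-1::complex)^f = -1" using assms(2) by simp
    have s: "(-1::complex) ^ (b + f*m) = (-1)^b * (-1)^m"
      by (simp only: power_add power_mult f1)
    have e1: "fps_exp (of_nat f :: complex) ^ m = fps_exp (of_nat m * of_nat f)" by (rule fps_exp_power_mult)
    have e: "fps_exp (of_nat (b + f*m) :: complex) = fps_exp (of_nat b) * fps_exp (of_nat f) ^ m"
      unfolding e1 fps_exp_add_mult[symmetric] by (simp add: mult.commute)
    have m1: "fps_const (-1::complex) = -1" by (simp flip: fps_const_neg)
    have n: "(- fps_exp (of_nat f :: complex))^m = fps_const ((-1)^m) * fps_exp (of_nat f) ^ m"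
      by (simp only: power_minus[of "fps_exp (of_nat f)"] m1[symmetric] fps_const_power)
    have k: "fps_const ((-1)^b * (-1)^m * chi b) = fps_const ((-1)^b * chi b) * fps_const ((-1::complex)^m)"
      by (simp add: mult_ac)
    show "?g (b + f*m) = ?g b * (- fps_exp (of_nat f))^m"
      unfolding c s e n k by (simp only: ac_simps)
  qed
  also have "\<dots> = TT chi f * (- fps_exp (of_nat f))^m" unfolding TT_def by (simp add: sum_distrib_right)
  finally show ?case using Suc by (simp add: distrib_left)
qed

lemma euler_chi_TT: "euler_chi chi F n = fact n * (2 * TT chi F * inverse (fps_exp (of_nat F) + 1)) $ n"
  unfolding euler_chi_def TT_def by simp

lemma euler_inv:
  assumes "dirichlet_char f chi" "odd f" "odd m"
  shows "euler_chi chi (f * m) n = euler_chi chi f n"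
proof -
  define X where "X = fps_exp (of_nat f :: complex)"
  define Q where "Q = (\<Sum>i<m. (-X)^i)"
  define D where "D = fps_exp (of_nat (f*m) :: complex) + 1"
  have XD: "D = (X + 1) * Q"
    unfolding Q_def geom_fps D_def X_def using assms(3) by (simp add: fps_exp_power_mult mult.commute)
  have T: "TT chi (f*m) = TT chi f * Q" unfolding Q_def X_def by (rule TT_mult[OF assms(1,2)])
  have inv: "A * inverse A = 1" if "A $ 0 = 2" for A :: "complex fps"
    using inverse_mult_eq_1'[of A] that by simp
  have D0: "D $ 0 = 2" unfolding D_def by simp
  have X0: "(X + 1) $ 0 = 2" unfolding X_def by simp
  have a1: "D * (2 * TT chi (f*m) * inverse D) = (2 * TT chi (f*m)) * (D * inverse D)"
    by (simp only: ac_simps)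
  have a2: "D * (2 * TT chi f * inverse (X+1)) = (2 * TT chi f * Q) * ((X + 1) * inverse (X+1))"
    unfolding XD by (simp only: ac_simps)
  have a3: "(2 * TT chi f * Q) * ((X + 1) * inverse (X+1)) = 2 * TT chi (f*m)"
    unfolding T inv[OF X0] by (simp only: ac_simps mult_1_right mult_1_left)
  have a4: "D * (2 * TT chi (f*m) * inverse D) = D * (2 * TT chi f * inverse (X+1))"
    unfolding a1 a2 a3 inv[OF D0] by simp
  have Dne: "D \<noteq> 0" using D0 by (intro notI) simp
  have "2 * TT chi (f*m) * inverse D = 2 * TT chi f * inverse (X+1)"
    using mult_left_cancel[OF Dne] a4 by blast
  from this[unfolded D_def X_def] show ?thesis unfolding euler_chi_TT by (simp only:)
qed



lemma vv_ne: "M > 0 \<Longrightarrow> vv M \<noteq> 0\<^sub>v M"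
proof
  assume "M > 0" "vv M = 0\<^sub>v M"
  hence "vv M $ 0 = 0" by simp
  with \<open>M > 0\<close> show False by (simp add: vv_def)
qed

lemma RR_alg: assumes "M > 0" "a \<in> RR M" shows "alg_int a"
proof -
  from assms(2) obtain A where "A \<in> carrier_mat M M" "map_mat of_int A *\<^sub>v vv M = a \<cdot>\<^sub>v vv M"
    unfolding RR_def by auto
  thus ?thesis using alg_int_eig[of A M "vv M" a] vv_ne[OF assms(1)] by (simp add: vv_def)
qed

lemma RR_pow: "a \<in> RR M \<Longrightarrow> a ^ k \<in> RR M"
  by (induction k) (auto intro: RR_mult simp: RR_int[of 1, simplified])

lemma RR_sum: "(\<And>i. i \<in> I \<Longrightarrow> g i \<in> RR M) \<Longrightarrow> sum g I \<in> RR M"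
proof (induction I rule: infinite_finite_induct)
  case (infinite A) thus ?case using RR_int[of 0 M] by simp
next
  case empty thus ?case using RR_int[of 0 M] by simp
next
  case (insert x F) thus ?case by (simp add: RR_add)
qed

lemma RR_nat: "of_nat c \<in> RR M" using RR_int[of "int c" M] by simp

lemma chi_one: assumes "dirichlet_char f chi" shows "chi 1 = 1"
proof -
  have "chi 1 = chi 1 * chi 1" using assms unfolding dirichlet_char_def by (metis mult_1)
  moreover have "chi 1 \<noteq> 0" using assms unfolding dirichlet_char_def by simp
  ultimately show ?thesis by (metis mult_cancel_left1)
qed

lemma chi_pow: assumes "dirichlet_char f chi" shows "chi (a ^ k) = chi a ^ k"
proof (induction k)
  case 0 show ?case using chi_one[OF assms] by simp
next
  case (Suc k)
  have "chi (a * a ^ k) = chi a * chi (a ^ k)" using assms unfolding dirichlet_char_def by blast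
  thus ?case using Suc by simp
qed

lemma chi_RR: assumes "dirichlet_char f chi" shows "chi a \<in> RR (totient f)"
proof (cases "coprime a f")
  case False
  hence "chi a = 0" using assms unfolding dirichlet_char_def by simp
  thus ?thesis using RR_int[of 0] by simp
next
  case True
  have f0: "f > 0" using assms unfolding dirichlet_char_def by simp
  define M where "M = totient f"
  have M0: "M > 0" using f0 unfolding M_def by simp
  have "chi a ^ M = 1"
  proof (cases "a = 0")
    case True
    with \<open>coprime a f\<close> have "f = 1" by simp
    have "chi (0 + f) = chi 0" using assms unfolding dirichlet_char_def by blast
    hence "chi a = 1" using True \<open>f = 1\<close> chi_one[OF assms] by simp
    thus ?thesis by simp
  next
    case False
    have "[a ^ M = 1] (mod f)" unfolding M_def by (rule euler_theorem[OF True])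
    moreover have "1 \<le> a ^ M" using False by simp
    ultimately obtain q where q: "a ^ M = q * f + 1" using cong_le_nat by blast
    have "chi (1 + f * q) = chi 1" by (rule char_period[OF assms])
    hence "chi (a ^ M) = 1" using q chi_one[OF assms] by (simp add: algebra_simps)
    thus ?thesis using chi_pow[OF assms] by simp
  qed
  then obtain k where "k < M" "chi a = cis (2 * pi * real k / real M)"
    using bij_betw_roots_unity[OF M0] unfolding bij_betw_def by auto
  hence "chi a = zz M ^ k" unfolding zz_def by (simp add: DeMoivre field_simps)
  thus ?thesis unfolding M_def[symmetric] using RR_pow[OF RR_zz[OF M0]] by simp
qed

definition PI :: "nat \<Rightarrow> nat \<Rightarrow> complex set" where
  "PI p M = {x. \<exists>a m. a \<in> RR M \<and> m \<noteq> 0 \<and> \<not> int p dvd m \<and> x = a / of_int m}"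

context fixes p M :: nat assumes p: "prime p"
begin

lemma RR_PI: "a \<in> RR M \<Longrightarrow> a \<in> PI p M"
  unfolding PI_def using p by (intro CollectI exI[of _ a] exI[of _ 1]) (auto simp: prime_gt_1_nat)

lemma PI_add: assumes "x \<in> PI p M" "y \<in> PI p M" shows "x + y \<in> PI p M"
proof -
  from assms obtain a m b n where "a \<in> RR M" "m \<noteq> 0" "\<not> int p dvd m" "x = a / of_int m"
    "b \<in> RR M" "n \<noteq> 0" "\<not> int p dvd n" "y = b / of_int n" unfolding PI_def by auto
  moreover have "\<not> int p dvd m * n" using p \<open>\<not> int p dvd m\<close> \<open>\<not> int p dvd n\<close>
    by (simp add: prime_dvd_mult_iff)
  moreover have "x + y = (a * of_int n + b * of_int m) / of_int (m * n)"
    using calculation by (simp add: field_simps)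
  ultimately show ?thesis unfolding PI_def
    by (intro CollectI exI[of _ "a * of_int n + b * of_int m"] exI[of _ "m*n"])
       (auto intro!: RR_add RR_mult RR_int)
qed

lemma PI_mult: assumes "x \<in> PI p M" "y \<in> PI p M" shows "x * y \<in> PI p M"
proof -
  from assms obtain a m b n where "a \<in> RR M" "m \<noteq> 0" "\<not> int p dvd m" "x = a / of_int m"
    "b \<in> RR M" "n \<noteq> 0" "\<not> int p dvd n" "y = b / of_int n" unfolding PI_def by auto
  moreover have "\<not> int p dvd m * n" using p \<open>\<not> int p dvd m\<close> \<open>\<not> int p dvd n\<close>
    by (simp add: prime_dvd_mult_iff)
  moreover have "x * y = (a * b) / of_int (m * n)"
    using calculation by (simp add: field_simps)
  ultimately show ?thesis unfolding PI_def
    by (intro CollectI exI[of _ "a * b"] exI[of _ "m*n"]) (auto intro!: RR_mult)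
qed

lemma PI_int: "of_int c \<in> PI p M" using RR_PI RR_int by blast
lemma PI_nat: "of_nat c \<in> PI p M" using RR_PI RR_nat by blast

lemma PI_diff: assumes "x \<in> PI p M" "y \<in> PI p M" shows "x - y \<in> PI p M"
  using PI_add[OF assms(1) PI_mult[OF PI_int[of "-1"] assms(2)]] by simp

lemma PI_sum: "(\<And>i. i \<in> I \<Longrightarrow> g i \<in> PI p M) \<Longrightarrow> sum g I \<in> PI p M"
proof (induction I rule: infinite_finite_induct)
  case (infinite A) thus ?case using PI_int[of 0] by simp
next
  case empty thus ?case using PI_int[of 0] by simp
next
  case (insert x F) thus ?case by (simp add: PI_add)
qed

lemma PI_div: assumes "x \<in> PI p M" "m \<noteq> 0" "\<not> int p dvd m" shows "x / of_int m \<in> PI p M"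
proof -
  from assms obtain a n where "a \<in> RR M" "n \<noteq> 0" "\<not> int p dvd n" "x = a / of_int n"
    unfolding PI_def by auto
  moreover have "\<not> int p dvd n * m" using p \<open>\<not> int p dvd n\<close> assms(3)
    by (simp add: prime_dvd_mult_iff)
  moreover have "x / of_int m = a / of_int (n * m)" using calculation by simp
  ultimately show ?thesis unfolding PI_def using assms(2)
    by (intro CollectI exI[of _ a] exI[of _ "n*m"]) auto
qed

lemma PI_pint: assumes "M > 0" "x \<in> PI p M" shows "p_integral p x"
  using assms RR_alg unfolding PI_def p_integral_def by blast

end



definition SS :: "(nat \<Rightarrow> complex) \<Rightarrow> nat \<Rightarrow> nat \<Rightarrow> complex" where
  "SS chi F n = (\<Sum>a=1..F. (-1) ^ a * chi a * of_nat a ^ n)"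

lemma rec2: "2 * euler_chi chi F n = 2 * SS chi F n -
   (\<Sum>i=1..n. of_nat (n choose i) * of_nat F ^ i * euler_chi chi F (n - i))"
proof -
  have "(\<Sum>i=0..n. of_nat (n choose i) * of_nat F ^ i * euler_chi chi F (n - i)) =
        euler_chi chi F n + (\<Sum>i=Suc 0..n. of_nat (n choose i) * of_nat F ^ i * euler_chi chi F (n - i))"
    by (subst sum.atLeast_Suc_atMost) auto
  thus ?thesis using euler_rec[of chi F n] unfolding SS_def by (simp add: algebra_simps)
qed

lemma reindex:
  assumes dc: "dirichlet_char f chi" and p: "odd p" "p > 0"
  shows "(\<Sum>a\<in>{a\<in>{1..f * p ^ Suc N}. \<not> p dvd a}. (-1) ^ a * chi a * of_nat a ^ n)
     = SS chi (f * p ^ Suc N) n - chi p * of_nat p ^ n * SS chi (f * p ^ N) n"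
proof -
  define g where "g = (\<lambda>a. (-1) ^ a * chi a * (of_nat a :: complex) ^ n)"
  define A where "A = {1..f * p ^ Suc N}"
  have Aeq: "A = {a\<in>A. p dvd a} \<union> {a\<in>A. \<not> p dvd a}" by auto
  hence "sum g A = sum g {a\<in>A. p dvd a} + sum g {a\<in>A. \<not> p dvd a}"
  proof -
    have "sum g ({a\<in>A. p dvd a} \<union> {a\<in>A. \<not> p dvd a}) = sum g {a\<in>A. p dvd a} + sum g {a\<in>A. \<not> p dvd a}"
      by (rule sum.union_disjoint) (auto simp: A_def)
    thus ?thesis using Aeq by simp
  qed
  moreover have img: "{a\<in>A. p dvd a} = (\<lambda>b. p * b) ` {1..f * p ^ N}"
  proof (intro equalityI subsetI)
    fix x assume "x \<in> {a\<in>A. p dvd a}"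
    then obtain b where b: "x = p * b" "1 \<le> x" "x \<le> p * (f * p ^ N)" unfolding A_def
      by (auto elim!: dvdE simp: ac_simps)
    hence "1 \<le> b" "b \<le> f * p ^ N" using p by (auto simp: mult_le_cancel1)
    thus "x \<in> (\<lambda>b. p * b) ` {1..f * p ^ N}" using b by auto
  next
    fix x assume "x \<in> (\<lambda>b. p * b) ` {1..f * p ^ N}"
    then obtain b where "b \<in> {1..f * p ^ N}" "x = p * b" by (rule imageE)
    thus "x \<in> {a\<in>A. p dvd a}" unfolding A_def using p by (auto simp: ac_simps)
  qed
  moreover have "sum g ((\<lambda>b. p * b) ` {1..f * p ^ N}) = (\<Sum>b=1..f * p ^ N. g (p * b))"
    using p by (subst sum.reindex) (auto simp: inj_on_def)
  moreover have "g (p * b) = chi p * of_nat p ^ n * ((-1) ^ b * chi b * of_nat b ^ n)" for b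
  proof -
    have "(-1::complex) ^ (p * b) = (-1) ^ b" using p by (simp add: power_mult)
    moreover have "chi (p * b) = chi p * chi b" using dc unfolding dirichlet_char_def by blast
    ultimately show ?thesis unfolding g_def by (simp add: power_mult_distrib)
  qed
  ultimately have "sum g A = chi p * of_nat p ^ n * SS chi (f * p ^ N) n + sum g {a\<in>A. \<not> p dvd a}"
    by (simp add: SS_def sum_distrib_left)
  moreover have "sum g A = SS chi (f * p ^ Suc N) n" by (simp add: SS_def g_def A_def)
  ultimately have "sum g {a\<in>A. \<not> p dvd a} = SS chi (f * p ^ Suc N) n - chi p * of_nat p ^ n * SS chi (f * p ^ N) n"
    by simp
  thus ?thesis by (simp add: g_def A_def)
qed



theorem corollary2p2:
  fixes p f n :: nat and chi :: "nat \<Rightarrow> complex"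
  assumes "prime p" and "odd p"
    and "primitive_char f chi" and "odd f"
  shows "padic_tendsto p
           (\<lambda>N. \<Sum>a\<in>{a\<in>{1..f * p ^ N}. \<not> p dvd a}. (-1) ^ a * chi a * of_nat a ^ n)
           ((1 - chi p * of_nat p ^ n) * euler_chi chi f n)"
proof -
  have dc: "dirichlet_char f chi" using assms(3) unfolding primitive_char_def by simp
  have f0: "f > 0" using dc unfolding dirichlet_char_def by simp
  define M where "M = totient f"
  have M0: "M > 0" using f0 unfolding M_def by simp
  have p0: "p > 0" using assms(1) prime_gt_0_nat by blast
  have p2: "\<not> int p dvd 2"
  proof
    assume "int p dvd 2"
    hence "p dvd 2" by presburger
    hence "p \<le> 2" by (simp add: dvd_imp_le)
    thus False using assms(1,2) prime_ge_2_nat[of p] by (cases "p = 2") auto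
  qed
  note P = assms(1)
  have chiPI: "chi a \<in> PI p M" for a using RR_PI[OF P] chi_RR[OF dc] unfolding M_def by blast
  have SS_PI: "SS chi F k \<in> PI p M" for F k
    unfolding SS_def
  proof (intro PI_sum[OF P])
    fix a
    have "(-1::complex) ^ a = of_int ((-1) ^ a)" by simp
    hence "(-1::complex) ^ a \<in> PI p M" using PI_int[OF P] by metis
    thus "(-1) ^ a * chi a * of_nat a ^ k \<in> PI p M"
      by (intro PI_mult[OF P] chiPI) (auto intro: RR_PI[OF P] RR_pow RR_nat)
  qed
  define E where "E = euler_chi chi f"
  have half: "x / 2 \<in> PI p M" if "x \<in> PI p M" for x
    using PI_div[OF P that, of 2] p2 by simp
  have E_PI: "E k \<in> PI p M" for k
  proof (induction k rule: less_induct)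
    case (less k)
    have "E k = SS chi f k - (\<Sum>i=1..k. of_nat (k choose i) * of_nat f ^ i * E (k - i)) / 2"
      using rec2[of chi f k] unfolding E_def by (simp add: field_simps)
    also have "\<dots> \<in> PI p M"
      by (intro PI_diff[OF P] SS_PI half PI_sum[OF P] PI_mult[OF P] PI_nat[OF P] less)
         (auto simp flip: of_nat_power intro: PI_nat[OF P])
    finally show ?case .
  qed
  have key: "(SS chi (f * p ^ N) n - E n) / of_nat p ^ k \<in> PI p M" if Nk: "k \<le> N" for N k
  proof -
    define F where "F = f * p ^ N"
    have EF: "euler_chi chi F j = E j" for j
      unfolding F_def E_def using euler_inv[OF dc assms(4), of "p ^ N" j] assms(2) by simp
    have "SS chi F n - E n = (\<Sum>i=1..n. of_nat (n choose i) * of_nat F ^ i * E (n - i)) / 2"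
      using rec2[of chi F n] unfolding EF by (simp add: field_simps)
    hence "(SS chi F n - E n) / of_nat p ^ k =
       (\<Sum>i=1..n. of_nat (n choose i) * (of_nat F ^ i / of_nat p ^ k) * E (n - i)) / 2"
      by (simp add: sum_divide_distrib mult.commute)
    also have "\<dots> = (\<Sum>i=1..n. of_nat (n choose i) * of_nat (f ^ i * p ^ (N * i - k)) * E (n - i)) / 2"
    proof -
      have "of_nat F ^ i / of_nat p ^ k = (of_nat (f ^ i * p ^ (N * i - k)) :: complex)"
        if "i \<in> {1..n}" for i
      proof -
        from that have "N * i \<ge> k" using Nk by (metis atLeastAtMost_iff le_trans mult_le_mono2 nat_mult_1_right)
        hence "p ^ (N * i) = p ^ (N * i - k) * p ^ k" by (simp flip: power_add)
        hence "of_nat F ^ i = (of_nat (f ^ i * p ^ (N * i - k)) * of_nat p ^ k :: complex)"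
          unfolding F_def by (simp add: power_mult_distrib power_mult[symmetric] mult.commute
            flip: of_nat_power of_nat_mult)
        thus ?thesis using p0 by simp
      qed
      thus ?thesis by (intro arg_cong[where f = "\<lambda>x. x / 2"] sum.cong) auto
    qed
    also have "\<dots> \<in> PI p M"
      by (intro half PI_sum[OF P] PI_mult[OF P] PI_nat[OF P] E_PI)
    finally show ?thesis unfolding F_def .
  qed
  show ?thesis unfolding padic_tendsto_def
  proof
    fix k
    show "\<exists>N0. \<forall>N\<ge>N0. p_integral p (((\<Sum>a\<in>{a\<in>{1..f * p ^ N}. \<not> p dvd a}. (-1) ^ a * chi a * of_nat a ^ n)
             - (1 - chi p * of_nat p ^ n) * euler_chi chi f n) / of_nat p ^ k)"
    proof (intro exI[of _ "Suc k"] allI impI)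
      fix N assume N: "Suc k \<le> N"
      then obtain N' where N': "N = Suc N'" "k \<le> N'" by (cases N) auto
      have "((\<Sum>a\<in>{a\<in>{1..f * p ^ N}. \<not> p dvd a}. (-1) ^ a * chi a * of_nat a ^ n)
             - (1 - chi p * of_nat p ^ n) * euler_chi chi f n) / of_nat p ^ k
        = (SS chi (f * p ^ N) n - E n) / of_nat p ^ k
          - chi p * of_nat p ^ n * ((SS chi (f * p ^ N') n - E n) / of_nat p ^ k)"
        unfolding N'(1) reindex[OF dc assms(2) p0] E_def using p0 by (simp add: field_simps)
      also have "\<dots> \<in> PI p M"
        by (intro PI_diff[OF P] PI_mult[OF P] key chiPI PI_nat[OF P, of "p ^ n", simplified])
           (use N N' in auto)
      finally show "p_integral p (((\<Sum>a\<in>{a\<in>{1..f * p ^ N}. \<not> p dvd a}. (-1) ^ a * chi a * of_nat a ^ n)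
             - (1 - chi p * of_nat p ^ n) * euler_chi chi f n) / of_nat p ^ k)"
        by (rule PI_pint[OF P M0])
    qed
  qed
qed

end
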